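(* Let $K \ge 2$, $k \in \{1,\dots,K-1\}$, $\mathbf{x}_0 = \mathbf{e}_k \in \{0,1\}^K$, and let $\mathbf{e}_K$ be the $K$-th standard basis vector. Let $\boldsymbol{\epsilon} \sim \mathcal{N}(\mathbf{0},\mathbf{I}_K)$, $Y = \max_{j\neq k}\epsilon_j - \epsilon_k$, and $F_Y$ the cumulative distribution function of $Y$. Let $(\gamma_t)_{t\in[0,1]}$ be a schedule with $\gamma_t \in (0,1)$, and let $(\tilde{\alpha}_t,\tilde{\sigma}_t)_{t\in[0,1]}$ be real coefficients with $\tilde{\sigma}_t>0$, $\tilde{\alpha}_t^2+\tilde{\sigma}_t^2=1$, and $F_Y(\tilde{\alpha}_t/\tilde{\sigma}_t) = \gamma_t$ for all $t$. Define $\mathbf{w}_t = \tilde{\alpha}_t\mathbf{x}_0 + \tilde{\sigma}_t\boldsymbol{\epsilon}$ and $\mathbf{z}_t = \mathbf{x}_0$ if $\mathbf{w}_t^{(k)} > \max_{j\neq k}\mathbf{w}_t^{(j)}$, $\mathbf{z}_t = \mathbf{e}_K$ otherwise. Let $u = F_Y(Y)$. Then $u$ is uniformly distributed on $[0,1]$, and for every $t\in[0,1]$, $$\mathbf{z}_t = \begin{cases}\mathbf{x}_0 & \text{if } \gamma_t > u,\\ \mathbf{e}_K & \text{otherwise.}\end{cases}$$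
   Context: This is the masked-diffusion setting in which each token's discrete state is the projection of a variance-preserving Gaussian latent along a deterministic path with a single fixed noise vector $\boldsymbol{\epsilon}$; $\gamma_t$ is the probability that the token is unmasked at time $t$. *)

theory Defs
  imports "HOL-Probability.Probability"
begin

text \<open>Vectors in R^K are represented as functions nat => real, indexed by {1..K}.
  basis_vec j is the j-th standard basis vector.\<close>
definition basis_vec :: "nat \<Rightarrow> nat \<Rightarrow> real" where
  "basis_vec j = (\<lambda>i. if i = j then 1 else 0)"

end

theory Submission
  imports Defs
begin

lemma (in prob_space) pair_indep:
  fixes X :: "nat \<Rightarrow> 'a \<Rightarrow> real"
  assumes indep: "indep_vars (\<lambda>_. borel) X I" and "j \<in> I" "k \<in> I" "j \<noteq> k"
  shows "indep_var borel (X j) borel (X k)"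
proof -
  have "indep_var
    borel ((\<lambda>f. f j) \<circ> (\<lambda>\<omega>. restrict (\<lambda>i. X i \<omega>) {j}))
    borel ((\<lambda>f. f k) \<circ> (\<lambda>\<omega>. restrict (\<lambda>i. X i \<omega>) {k}))"
    using assms by (intro indep_var_compose[OF indep_var_restrict[OF indep]]) auto
  also have "((\<lambda>f. f j) \<circ> (\<lambda>\<omega>. restrict (\<lambda>i. X i \<omega>) {j})) = X j"
    by auto
  also have "((\<lambda>f. f k) \<circ> (\<lambda>\<omega>. restrict (\<lambda>i. X i \<omega>) {k})) = X k"
    by auto
  finally show ?thesis .
qed

lemma (in prob_space) no_atom:
  fixes Z :: "'a \<Rightarrow> real"
  assumes "distributed M lborel Z f"
  shows "prob {\<omega> \<in> space M. Z \<omega> = y} = 0"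
proof -
  have "emeasure M (Z -` {y} \<inter> space M) = (\<integral>\<^sup>+x. f x * indicator {y} x \<partial>lborel)"
    using distributed_emeasure[OF assms] by simp
  also have "\<dots> = 0"
    by (rule nn_integral_null_set) auto
  finally show ?thesis
    by (simp add: measure_def Int_def conj_commute vimage_def)
qed

lemma (in prob_space) pos_interval:
  fixes Z :: "'a \<Rightarrow> real"
  assumes "distributed M lborel Z std_normal_density" "c < d"
  shows "prob (Z -` {c<..<d} \<inter> space M) > 0"
proof -
  have e: "emeasure M (Z -` {c<..<d} \<inter> space M) = (\<integral>\<^sup>+x. ennreal (std_normal_density x) * indicator {c<..<d} x \<partial>lborel)"
    using distributed_emeasure[OF assms(1)] by simp
  have "(\<integral>\<^sup>+x. ennreal (std_normal_density x) * indicator {c<..<d} x \<partial>lborel) \<noteq> 0"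
  proof
    assume "(\<integral>\<^sup>+x. ennreal (std_normal_density x) * indicator {c<..<d} x \<partial>lborel) = 0"
    then have "AE x in lborel. ennreal (std_normal_density x) * indicator {c<..<d} x = 0"
      by (subst (asm) nn_integral_0_iff_AE) auto
    then have "AE x in lborel. x \<notin> {c<..<d}"
      by eventually_elim (auto simp: std_normal_density_def split: split_indicator)
    then have "emeasure lborel {c<..<d} = 0"
      by (subst (asm) AE_iff_measurable[of "{c<..<d}"]) auto
    with assms(2) show False by simp
  qed
  then have "emeasure M (Z -` {c<..<d} \<inter> space M) \<noteq> 0" using e by simp
  then show ?thesis
    by (simp add: emeasure_eq_measure zero_less_measure_iff)
qed

theorem theorem3p3:
  fixes M :: "'a measure"
    and K k :: nat
    and \<epsilon> :: "'a \<Rightarrow> nat \<Rightarrow> real"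
    and \<gamma> \<alpha> \<sigma> :: "real \<Rightarrow> real"
    and Y U :: "'a \<Rightarrow> real"
    and w :: "real \<Rightarrow> 'a \<Rightarrow> nat \<Rightarrow> real"
    and z :: "real \<Rightarrow> 'a \<Rightarrow> nat \<Rightarrow> real"
  assumes "prob_space M"
    and "K \<ge> 2" and "k \<in> {1..K-1}"
    and "\<And>j. j \<in> {1..K} \<Longrightarrow> distributed M lborel (\<lambda>\<omega>. \<epsilon> \<omega> j) std_normal_density"
    and "prob_space.indep_vars M (\<lambda>_. borel) (\<lambda>j \<omega>. \<epsilon> \<omega> j) {1..K}"
    and "Y = (\<lambda>\<omega>. Max ((\<lambda>j. \<epsilon> \<omega> j) ` ({1..K} - {k})) - \<epsilon> \<omega> k)"
    and "\<And>t. t \<in> {0..1} \<Longrightarrow> 0 < \<gamma> t \<and> \<gamma> t < 1"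
    and "\<And>t. t \<in> {0..1} \<Longrightarrow> \<sigma> t > 0"
    and "\<And>t. t \<in> {0..1} \<Longrightarrow> (\<alpha> t)\<^sup>2 + (\<sigma> t)\<^sup>2 = 1"
    and "\<And>t. t \<in> {0..1} \<Longrightarrow> cdf (distr M borel Y) (\<alpha> t / \<sigma> t) = \<gamma> t"
    and "w = (\<lambda>t \<omega> i. \<alpha> t * basis_vec k i + \<sigma> t * \<epsilon> \<omega> i)"
    and "z = (\<lambda>t \<omega>. if w t \<omega> k > Max ((\<lambda>j. w t \<omega> j) ` ({1..K} - {k}))
                      then basis_vec k else basis_vec K)"
    and "U = (\<lambda>\<omega>. cdf (distr M borel Y) (Y \<omega>))"
  shows "distr M lborel U = uniform_measure lborel {0..1}
    \<and> (\<forall>t \<in> {0..1}. \<forall>\<omega> \<in> space M.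
          z t \<omega> = (if \<gamma> t > U \<omega> then basis_vec k else basis_vec K))"
proof -
  interpret P: prob_space M by fact
  define S where "S = {1..K} - {k}"
  have kI: "k \<in> {1..K}" using assms(2,3) by auto
  have kK: "k \<noteq> K" using assms(2,3) by auto
  have KS: "K \<in> S" using kK assms(2) by (auto simp: S_def)
  have Sfin: "finite S" and Sne: "S \<noteq> {}"
    using KS unfolding S_def by auto
  have rv: "\<And>j. j \<in> {1..K} \<Longrightarrow> (\<lambda>\<omega>. \<epsilon> \<omega> j) \<in> borel_measurable M"
    using assms(4) distributed_measurable by fastforce
  have Ymeas: "Y \<in> borel_measurable M"
    unfolding assms(6) using rv kI Sfin
    by (intro borel_measurable_diff borel_measurable_Max) (auto simp: S_def)
  define D where "D = distr M borel Y"
  define F where "F = cdf D"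
  interpret D: real_distribution D unfolding D_def using Ymeas by auto
  have Fprob: "F y = P.prob {\<omega>\<in>space M. Y \<omega> \<le> y}" for y
    unfolding F_def cdf_def D_def using Ymeas
    by (subst measure_distr) (auto simp: vimage_def Int_def conj_commute)
  have atoms: "measure D {y} = 0" for y
  proof -
    have "measure D {y} = P.prob {\<omega>\<in>space M. Y \<omega> = y}"
      unfolding D_def using Ymeas
      by (subst measure_distr) (auto simp: vimage_def Int_def conj_commute)
    also have "\<dots> \<le> P.prob (\<Union>j\<in>S. {\<omega>\<in>space M. \<epsilon> \<omega> j - \<epsilon> \<omega> k = y})"
    proof (rule P.finite_measure_mono)
      show "{\<omega>\<in>space M. Y \<omega> = y} \<subseteq> (\<Union>j\<in>S. {\<omega>\<in>space M. \<epsilon> \<omega> j - \<epsilon> \<omega> k = y})"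
      proof
        fix \<omega> assume "\<omega> \<in> {\<omega>\<in>space M. Y \<omega> = y}"
        moreover have "Max ((\<lambda>j. \<epsilon> \<omega> j) ` S) \<in> (\<lambda>j. \<epsilon> \<omega> j) ` S"
          using Sfin Sne by (intro Max_in) auto
        ultimately show "\<omega> \<in> (\<Union>j\<in>S. {\<omega>\<in>space M. \<epsilon> \<omega> j - \<epsilon> \<omega> k = y})"
          unfolding assms(6) S_def by auto
      qed
      show "(\<Union>j\<in>S. {\<omega>\<in>space M. \<epsilon> \<omega> j - \<epsilon> \<omega> k = y}) \<in> P.events"
        using Sfin rv kI by (intro sets.finite_UN) (auto simp: S_def)
    qed
    also have "\<dots> \<le> (\<Sum>j\<in>S. P.prob {\<omega>\<in>space M. \<epsilon> \<omega> j - \<epsilon> \<omega> k = y})"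
      using Sfin rv kI by (intro P.finite_measure_subadditive_finite) (auto simp: S_def)
    also have "\<dots> = 0"
    proof (rule sum.neutral, rule ballI)
      fix j assume j: "j \<in> S"
      have "P.indep_var borel (\<lambda>\<omega>. \<epsilon> \<omega> j) borel (\<lambda>\<omega>. \<epsilon> \<omega> k)"
        using P.pair_indep[OF assms(5), of j k] j kI by (auto simp: S_def)
      then have "distributed M lborel (\<lambda>\<omega>. \<epsilon> \<omega> j - \<epsilon> \<omega> k)
          (normal_density (0 - 0) (sqrt (1\<^sup>2 + 1\<^sup>2)))"
        using j kI assms(4) by (intro P.diff_indep_normal) (auto simp: S_def)
      then show "P.prob {\<omega>\<in>space M. \<epsilon> \<omega> j - \<epsilon> \<omega> k = y} = 0"
        by (rule P.no_atom)
    qed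
    finally show ?thesis using measure_nonneg[of D "{y}"] by linarith
  qed
  have Fcont: "isCont F y" for y
    unfolding F_def D.isCont_cdf using atoms by simp
  have Fsm: "strict_mono F"
  proof (rule strict_monoI)
    fix a b :: real assume ab: "a < b"
    define m where "m = (a + b) / 2"
    define d where "d = (b - a) / 4"
    have d: "d > 0" using ab by (simp add: d_def)
    define A where "A = (\<lambda>i. if i = k then {0<..<d} else {m<..<m+d})"
    have Aint: "(\<Inter>i\<in>{1..K}. (\<lambda>\<omega>. \<epsilon> \<omega> i) -` A i \<inter> space M)
        \<subseteq> {\<omega>\<in>space M. a < Y \<omega> \<and> Y \<omega> \<le> b}"
    proof
      fix \<omega> assume H: "\<omega> \<in> (\<Inter>i\<in>{1..K}. (\<lambda>\<omega>. \<epsilon> \<omega> i) -` A i \<inter> space M)"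
      have sp: "\<omega> \<in> space M" using H kI by auto
      have "\<epsilon> \<omega> k \<in> A k" using H kI by blast
      then have ek: "0 < \<epsilon> \<omega> k" "\<epsilon> \<omega> k < d" by (auto simp: A_def)
      have ej: "m < \<epsilon> \<omega> j \<and> \<epsilon> \<omega> j < m + d" if "j \<in> S" for j
      proof -
        have "\<epsilon> \<omega> j \<in> A j" using H that by (auto simp: S_def)
        then show ?thesis using that by (auto simp: A_def S_def)
      qed
      have "Max ((\<lambda>j. \<epsilon> \<omega> j) ` S) \<in> (\<lambda>j. \<epsilon> \<omega> j) ` S"
        using Sfin Sne by (intro Max_in) auto
      then obtain j where "j \<in> S" "Max ((\<lambda>j. \<epsilon> \<omega> j) ` S) = \<epsilon> \<omega> j" by auto
      then have "m < Max ((\<lambda>j. \<epsilon> \<omega> j) ` S)" "Max ((\<lambda>j. \<epsilon> \<omega> j) ` S) < m + d"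
        using ej by auto
      then show "\<omega> \<in> {\<omega>\<in>space M. a < Y \<omega> \<and> Y \<omega> \<le> b}"
        using sp ek ab unfolding assms(6) S_def[symmetric] m_def d_def
        by (auto simp: field_simps)
    qed
    have "0 < (\<Prod>i\<in>{1..K}. P.prob ((\<lambda>\<omega>. \<epsilon> \<omega> i) -` A i \<inter> space M))"
      using assms(4) d by (intro prod_pos) (auto simp: A_def intro!: P.pos_interval)
    also have "\<dots> = P.prob (\<Inter>i\<in>{1..K}. (\<lambda>\<omega>. \<epsilon> \<omega> i) -` A i \<inter> space M)"
      using assms(2) by (intro P.indep_varsD[OF assms(5), symmetric]) (auto simp: A_def)
    also have "\<dots> \<le> P.prob {\<omega>\<in>space M. a < Y \<omega> \<and> Y \<omega> \<le> b}"
      using Aint Ymeas by (intro P.finite_measure_mono) auto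
    also have "{\<omega>\<in>space M. a < Y \<omega> \<and> Y \<omega> \<le> b} = {\<omega>\<in>space M. Y \<omega> \<le> b} - {\<omega>\<in>space M. Y \<omega> \<le> a}"
      using ab by auto
    also have "P.prob \<dots> = F b - F a"
      unfolding Fprob using Ymeas ab by (subst P.finite_measure_Diff) auto
    finally show "F a < F b" by simp
  qed
  have Fmono: "mono F" using Fsm by (rule strict_mono_mono)
  have UF: "U = (\<lambda>\<omega>. F (Y \<omega>))" unfolding assms(13) F_def D_def ..
  have part2: "\<forall>t \<in> {0..1}. \<forall>\<omega> \<in> space M.
          z t \<omega> = (if \<gamma> t > U \<omega> then basis_vec k else basis_vec K)"
  proof (intro ballI)
    fix t \<omega> assume t: "t \<in> {0..(1::real)}" and "\<omega> \<in> space M"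
    have sg: "\<sigma> t > 0" using assms(8) t by auto
    have wk: "w t \<omega> k = \<alpha> t + \<sigma> t * \<epsilon> \<omega> k"
      unfolding assms(11) basis_vec_def by simp
    have wj: "(\<lambda>j. w t \<omega> j) ` S = (\<lambda>x. \<sigma> t * x) ` ((\<lambda>j. \<epsilon> \<omega> j) ` S)"
      unfolding image_image assms(11) basis_vec_def
      by (intro image_cong) (auto simp: S_def)
    have mono_s: "mono (\<lambda>x. \<sigma> t * x)"
      using sg by (intro monoI) (simp add: mult_left_mono)
    have Mx: "Max ((\<lambda>x. \<sigma> t * x) ` ((\<lambda>j. \<epsilon> \<omega> j) ` S)) = \<sigma> t * Max ((\<lambda>j. \<epsilon> \<omega> j) ` S)"
      using Sfin Sne by (intro mono_Max_commute[symmetric] mono_s) auto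
    have c1: "(w t \<omega> k > Max ((\<lambda>j. w t \<omega> j) ` ({1..K} - {k}))) \<longleftrightarrow> Y \<omega> < \<alpha> t / \<sigma> t"
    proof -
      have "(w t \<omega> k > Max ((\<lambda>j. w t \<omega> j) ` ({1..K} - {k}))) \<longleftrightarrow>
            \<sigma> t * Max ((\<lambda>j. \<epsilon> \<omega> j) ` S) < \<alpha> t + \<sigma> t * \<epsilon> \<omega> k"
        using wk wj Mx by (simp add: S_def)
      also have "\<dots> \<longleftrightarrow> (Max ((\<lambda>j. \<epsilon> \<omega> j) ` S) - \<epsilon> \<omega> k) * \<sigma> t < \<alpha> t"
        by (simp add: algebra_simps)
      also have "\<dots> \<longleftrightarrow> Y \<omega> < \<alpha> t / \<sigma> t"
        using sg unfolding assms(6) S_def[symmetric] by (simp add: pos_less_divide_eq)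
      finally show ?thesis .
    qed
    have c2: "\<gamma> t > U \<omega> \<longleftrightarrow> Y \<omega> < \<alpha> t / \<sigma> t"
      using assms(10)[OF t] UF strict_mono_less[OF Fsm, of "Y \<omega>" "\<alpha> t / \<sigma> t"]
      unfolding F_def D_def by metis
    show "z t \<omega> = (if \<gamma> t > U \<omega> then basis_vec k else basis_vec K)"
      unfolding assms(12) using c1 c2 by simp
  qed
  have Fpos: "F y > 0" for y
  proof -
    have "F (y - 1) \<ge> 0" unfolding F_def cdf_def by simp
    also have "F (y - 1) < F y" using Fsm by (simp add: strict_mono_less)
    finally show ?thesis by simp
  qed
  have Fle1: "F y \<le> 1" for y unfolding F_def by (rule D.cdf_bounded_prob)
  have Fsurj: "\<exists>y. F y = x" if x: "0 < x" "x < 1" for x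
  proof -
    have "eventually (\<lambda>y. F y < x) at_bot"
      using order_tendstoD(2)[OF D.cdf_lim_at_bot x(1)] unfolding F_def .
    then obtain a where a: "F a < x" by (auto simp: eventually_at_bot_linorder)
    have "eventually (\<lambda>y. F y > x) at_top"
      using order_tendstoD(1)[OF D.cdf_lim_at_top_prob x(2)] unfolding F_def .
    then obtain b where b: "F b > x" by (auto simp: eventually_at_top_linorder)
    have ab: "a \<le> b"
    proof (rule ccontr)
      assume "\<not> a \<le> b" then have "F b \<le> F a" using Fmono by (simp add: monoD)
      with a b show False by simp
    qed
    have "continuous_on {a..b} F"
      using Fcont by (intro continuous_at_imp_continuous_on) auto
    then show ?thesis using IVT'[of F a x b] a b ab by auto
  qed
  have Umeas: "U \<in> borel_measurable M"
    unfolding UF using Ymeas borel_measurable_mono[OF Fmono]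
    by (rule measurable_compose)
  have rd1: "real_distribution (distr M lborel U)"
    unfolding real_distribution_def real_distribution_axioms_def
    using Umeas by (auto intro!: P.prob_space_distr)
  have rd2: "real_distribution (uniform_measure lborel {0..1::real})"
    unfolding real_distribution_def real_distribution_axioms_def
    by (auto intro!: prob_space_uniform_measure)
  have "cdf (distr M lborel U) = cdf (uniform_measure lborel {0..1::real})"
  proof
    fix x :: real
    have L: "cdf (distr M lborel U) x = P.prob {\<omega>\<in>space M. F (Y \<omega>) \<le> x}"
      unfolding cdf_def using Umeas
      by (subst measure_distr) (auto simp: vimage_def Int_def conj_commute UF)
    have R: "cdf (uniform_measure lborel {0..1::real}) x = measure lborel ({0..1} \<inter> {..x})"
      unfolding cdf_def by (subst measure_uniform_measure) auto
    show "cdf (distr M lborel U) x = cdf (uniform_measure lborel {0..1::real}) x"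
    proof (cases "x \<le> 0")
      case True
      then have "{\<omega>\<in>space M. F (Y \<omega>) \<le> x} = {}" using Fpos by (auto simp: not_le intro: le_less_trans)
      moreover have "{0..1} \<inter> {..x} \<subseteq> {0::real}" using True by auto
      then have "measure lborel ({0..1} \<inter> {..x}) = 0"
        using True by (cases "x = 0") auto
      ultimately show ?thesis using L R by (simp only:) simp
    next
      case False
      show ?thesis
      proof (cases "x \<ge> 1")
        case True
        then have "{\<omega>\<in>space M. F (Y \<omega>) \<le> x} = space M" using Fle1 by (auto intro: order_trans)
        moreover have "{0..1} \<inter> {..x} = {0..1::real}" using True by auto
        ultimately show ?thesis using L R P.prob_space by simp
      next
        case False2: False
        obtain y where y: "F y = x" using Fsurj[of x] False False2 by auto
        have "{\<omega>\<in>space M. F (Y \<omega>) \<le> x} = {\<omega>\<in>space M. Y \<omega> \<le> y}"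
          using strict_mono_less_eq[OF Fsm] y by auto
        moreover have "{0..1} \<inter> {..x} = {0..x}" using False2 by auto
        ultimately show ?thesis using L R Fprob[of y] y False by simp
      qed
    qed
  qed
  then have "distr M lborel U = uniform_measure lborel {0..1}"
    by (rule cdf_unique[OF rd1 rd2])
  with part2 show ?thesis by blast
qed
end
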